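(* Let $S$ be a finite non-abelian subset of $BS^{+}(1,3)$ with $k=|S|\geq 3$, and suppose that $S$ meets at least two distinct cosets of $\langle a\rangle$, i.e. in the coset decomposition $S=S_0\cup S_1\cup\cdots\cup S_t$ we have $t\geq 1$. Then $$|S^2|\geq \tfrac{7}{2}|S|-6.$$
   Context: $BS(1,3)=\langle a,b\mid ab=ba^3\rangle$ is the Baumslag–Solitar group. In it, $a^x b^m=b^m a^{3^m x}$ for all integers $x$ and $m\ge 0$, and every element of the form $b^m a^x$ ($m\ge 0$, $x\in\mathbb Z$) has a unique such representation. $BS^{+}(1,3)=\{b^m a^x: m\in\mathbb{Z}_{\ge 0},\ x\in\mathbb{Z}\}$ is a submonoid of $BS(1,3)$, with $(b^m a^x)(b^n a^y)=b^{m+n}a^{y+3^n x}$. For $A\subseteq\mathbb Z$ and $m\ge 0$, $b^m a^A=\{b^m a^x: x\in A\}$. For a set $S$ in a group, $S^2=\{st: s,t\in S\}$. A set $S$ is called non-abelian if the subgroup it generates is non-abelian (and abelian otherwise). Coset decomposition: for a finite nonempty $S\subseteq BS^{+}(1,3)$, let $m_0<m_1<\cdots<m_t$ be the distinct integers $m\ge 0$ with $S\cap b^m a^{\mathbb Z}\neq\emptyset$; put $S_i=S\cap b^{m_i}a^{\mathbb Z}=b^{m_i}a^{A_i}$ with $A_i\subseteq\mathbb Z$ finite, and $k_i=|S_i|$. Writing $S=S_0\cup S_1\cup\cdots\cup S_t$ always refers to this decomposition. *)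

theory Defs
  imports Complex_Main "HOL-Algebra.Group" "HOL-Algebra.Generated_Groups"
begin

text \<open>BS(1,3) modelled concretely as Z[1/3] semidirect Z: the pair (m, x) stands for
  b^m a^x, with m an integer and x in Z[1/3]; multiplication
  (b^m a^x)(b^n a^y) = b^(m+n) a^(y + 3^n x).  Here a = (0,1), b = (1,0).\<close>

definition BS13 :: "(int \<times> rat) monoid" where
  "BS13 = \<lparr> carrier = {(m, x). \<exists>k::int. \<exists>j::nat. x = of_int k / 3 ^ j},
            mult = (\<lambda>(m, x) (n, y). (m + n, y + 3 powi n * x)),
            one = (0, 0) \<rparr>"

text \<open>Elements of the monoid BS+(1,3): the pair (m, x) with m \<ge> 0 stands for b^m a^x.\<close>
type_synonym bsp = "nat \<times> int"

definition bsp_mult :: "bsp \<Rightarrow> bsp \<Rightarrow> bsp" where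
  "bsp_mult = (\<lambda>(m, x) (n, y). (m + n, y + 3 ^ n * x))"

definition bsp_embed :: "bsp \<Rightarrow> int \<times> rat" where
  "bsp_embed = (\<lambda>(m, x). (int m, of_int x))"

definition set_square :: "bsp set \<Rightarrow> bsp set" where
  "set_square S = {bsp_mult s t | s t. s \<in> S \<and> t \<in> S}"

definition non_abelian :: "bsp set \<Rightarrow> bool" where
  "non_abelian S \<longleftrightarrow>
     (\<exists>g\<in>generate BS13 (bsp_embed ` S). \<exists>h\<in>generate BS13 (bsp_embed ` S).
        g \<otimes>\<^bsub>BS13\<^esub> h \<noteq> h \<otimes>\<^bsub>BS13\<^esub> g)"

end

theory Submission
  imports Defs
begin

definition tri :: "rat \<Rightarrow> bool" where
  "tri x \<longleftrightarrow> (\<exists>k::int. \<exists>j::nat. x = of_int k / 3 ^ j)"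

lemma tri_add: "tri x \<Longrightarrow> tri y \<Longrightarrow> tri (x + y)"
proof -
  assume "tri x" "tri y"
  then obtain k j l i where x: "x = of_int k / 3 ^ j" and y: "y = of_int l / 3 ^ i"
    unfolding tri_def by blast
  have "x + y = of_int (k * 3 ^ i + l * 3 ^ j) / 3 ^ (i + j)"
    by (simp add: x y field_simps power_add)
  then show ?thesis unfolding tri_def by blast
qed

lemma tri_neg: "tri x \<Longrightarrow> tri (- x)"
  unfolding tri_def by (metis minus_divide_left of_int_minus)

lemma tri_0: "tri 0"
  unfolding tri_def by (rule exI[of _ 0], rule exI[of _ 0]) simp

lemma tri_powi: "tri x \<Longrightarrow> tri (3 powi n * x)"
proof -
  assume "tri x"
  then obtain k j where x: "x = of_int k / 3 ^ j" unfolding tri_def by blast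
  show ?thesis
  proof (cases "n \<ge> 0")
    case True
    then have "3 powi n * x = of_int (3 ^ nat n * k) / 3 ^ j"
      by (simp add: x power_int_nonneg_exp)
    then show ?thesis unfolding tri_def by blast
  next
    case False
    then have "3 powi n * x = of_int k / 3 ^ (j + nat (- n))"
    proof -
      have "3 powi n = (1::rat) / 3 ^ nat (-n)"
        using False by (metis power_int_minus_divide power_int_nonneg_exp minus_minus neg_0_le_iff_le nle_le)
      then show ?thesis by (simp add: x power_add)
    qed
    then show ?thesis unfolding tri_def by blast
  qed
qed

lemma BS13_carrier: "p \<in> carrier BS13 \<longleftrightarrow> tri (snd p)"
  by (cases p) (auto simp: BS13_def tri_def)

lemma BS13_mult: "(m, x) \<otimes>\<^bsub>BS13\<^esub> (n, y) = (m + n, y + 3 powi n * x)"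
  by (simp add: BS13_def)

lemma BS13_one: "\<one>\<^bsub>BS13\<^esub> = (0, 0)"
  by (simp add: BS13_def)

lemma group_BS13: "group BS13"
proof (rule groupI)
  fix x y assume "x \<in> carrier BS13" "y \<in> carrier BS13"
  then show "x \<otimes>\<^bsub>BS13\<^esub> y \<in> carrier BS13"
    by (cases x; cases y) (auto simp: BS13_carrier BS13_mult intro!: tri_add tri_powi)
next
  show "\<one>\<^bsub>BS13\<^esub> \<in> carrier BS13" by (simp add: BS13_one BS13_carrier tri_0)
next
  fix x y z assume "x \<in> carrier BS13" "y \<in> carrier BS13" "z \<in> carrier BS13"
  then show "x \<otimes>\<^bsub>BS13\<^esub> y \<otimes>\<^bsub>BS13\<^esub> z = x \<otimes>\<^bsub>BS13\<^esub> (y \<otimes>\<^bsub>BS13\<^esub> z)"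
    by (cases x; cases y; cases z) (auto simp: BS13_mult power_int_add algebra_simps)
next
  fix x assume "x \<in> carrier BS13"
  then show "\<one>\<^bsub>BS13\<^esub> \<otimes>\<^bsub>BS13\<^esub> x = x"
    by (cases x) (simp add: BS13_one BS13_mult)
next
  fix x assume "x \<in> carrier BS13"
  then obtain m a where x: "x = (m, a)" "tri a" by (cases x) (auto simp: BS13_carrier)
  have "(- m, - (3 powi (- m) * a)) \<in> carrier BS13"
    using x by (simp add: BS13_carrier tri_neg tri_powi)
  moreover have "(- m, - (3 powi (- m) * a)) \<otimes>\<^bsub>BS13\<^esub> x = \<one>\<^bsub>BS13\<^esub>"
  proof -
    have "(3::rat) powi m * 3 powi (- m) = 1"
      by (simp add: power_int_add[symmetric])
    then show ?thesis by (simp add: x BS13_mult BS13_one algebra_simps)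
  qed
  ultimately show "\<exists>y\<in>carrier BS13. y \<otimes>\<^bsub>BS13\<^esub> x = \<one>\<^bsub>BS13\<^esub>" by blast
qed

lemma embed_mult: "bsp_embed (bsp_mult s t) = bsp_embed s \<otimes>\<^bsub>BS13\<^esub> bsp_embed t"
  by (cases s; cases t) (simp add: bsp_embed_def bsp_mult_def BS13_mult)

lemma embed_inj: "inj bsp_embed"
  unfolding inj_def bsp_embed_def by auto

lemma embed_carrier: "bsp_embed s \<in> carrier BS13"
proof (cases s)
  case (Pair a b)
  have "tri (of_int b)" unfolding tri_def by (rule exI[of _ b], rule exI[of _ 0]) simp
  then show ?thesis by (simp add: Pair bsp_embed_def BS13_carrier)
qed

lemma group_comm_inv:
  assumes "group G" "g \<in> carrier G" "h \<in> carrier G" "g \<otimes>\<^bsub>G\<^esub> h = h \<otimes>\<^bsub>G\<^esub> g"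
  shows "g \<otimes>\<^bsub>G\<^esub> inv\<^bsub>G\<^esub> h = inv\<^bsub>G\<^esub> h \<otimes>\<^bsub>G\<^esub> g"
proof -
  interpret group G by fact
  have ih: "inv\<^bsub>G\<^esub> h \<in> carrier G" using assms(3) by simp
  have "g \<otimes>\<^bsub>G\<^esub> inv\<^bsub>G\<^esub> h = inv\<^bsub>G\<^esub> h \<otimes>\<^bsub>G\<^esub> (h \<otimes>\<^bsub>G\<^esub> g) \<otimes>\<^bsub>G\<^esub> inv\<^bsub>G\<^esub> h"
    using assms(2,3) ih by (simp add: m_assoc[symmetric])
  also have "\<dots> = inv\<^bsub>G\<^esub> h \<otimes>\<^bsub>G\<^esub> (g \<otimes>\<^bsub>G\<^esub> h) \<otimes>\<^bsub>G\<^esub> inv\<^bsub>G\<^esub> h"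
    using assms(4) by simp
  also have "\<dots> = inv\<^bsub>G\<^esub> h \<otimes>\<^bsub>G\<^esub> g"
    using assms(2,3) ih by (simp add: m_assoc)
  finally show ?thesis .
qed

lemma non_abelian_pair:
  assumes "non_abelian S"
  shows "\<exists>s\<in>S. \<exists>s'\<in>S. bsp_mult s s' \<noteq> bsp_mult s' s"
proof (rule ccontr)
  assume "\<not> ?thesis"
  then have C: "\<And>s s'. s \<in> S \<Longrightarrow> s' \<in> S \<Longrightarrow> bsp_mult s s' = bsp_mult s' s" by blast
  interpret group BS13 by (rule group_BS13)
  define H where "H = bsp_embed ` S"
  have Hc: "H \<subseteq> carrier BS13" using embed_carrier H_def by auto
  have HH: "a \<otimes>\<^bsub>BS13\<^esub> b = b \<otimes>\<^bsub>BS13\<^esub> a" if "a \<in> H" "b \<in> H" for a b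
    using that C unfolding H_def by (auto simp: embed_mult[symmetric])
  have step1: "g \<otimes>\<^bsub>BS13\<^esub> h = h \<otimes>\<^bsub>BS13\<^esub> g" if "g \<in> generate BS13 H" "h \<in> H" for g h
    using that(1)
  proof (induct g rule: generate.induct)
    case one
    then show ?case using Hc that(2) by auto
  next
    case (incl a)
    then show ?case using HH that(2) by auto
  next
    case (inv a)
    have "h \<otimes>\<^bsub>BS13\<^esub> inv\<^bsub>BS13\<^esub> a = inv\<^bsub>BS13\<^esub> a \<otimes>\<^bsub>BS13\<^esub> h"
      using group_comm_inv[OF group_BS13, of h a] HH[OF that(2) inv] Hc inv that(2) by auto
    then show ?case by simp
  next
    case (eng a b)
    have ac: "a \<in> carrier BS13" "b \<in> carrier BS13" using eng(1,3) generate_in_carrier[OF Hc] by auto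
    have hc: "h \<in> carrier BS13" using Hc that(2) by auto
    show ?case using eng(2,4) ac hc by (simp add: m_assoc) (metis m_assoc)
  qed
  have step2: "g \<otimes>\<^bsub>BS13\<^esub> h = h \<otimes>\<^bsub>BS13\<^esub> g" if "h \<in> generate BS13 H" "g \<in> generate BS13 H" for g h
    using that(1)
  proof (induct h rule: generate.induct)
    case one
    then show ?case using generate_in_carrier[OF Hc that(2)] by auto
  next
    case (incl a)
    then show ?case using step1 that(2) by auto
  next
    case (inv a)
    show ?case
      using group_comm_inv[OF group_BS13, of g a] step1[OF that(2) inv] Hc inv generate_in_carrier[OF Hc that(2)] by auto
  next
    case (eng a b)
    have ac: "a \<in> carrier BS13" "b \<in> carrier BS13" using eng(1,3) generate_in_carrier[OF Hc] by auto
    have gc: "g \<in> carrier BS13" using generate_in_carrier[OF Hc that(2)] .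
    show ?case using eng(2,4) ac gc by (metis m_assoc)
  qed
  then show False using assms unfolding non_abelian_def H_def by blast
qed

lemma pairset_eq: "{f x y |x y. x \<in> X \<and> y \<in> Y} = (\<lambda>(x, y). f x y) ` (X \<times> Y)"
  by auto

lemma finite_pairset: "finite X \<Longrightarrow> finite Y \<Longrightarrow> finite {f x y |x y. x \<in> X \<and> y \<in> Y}"
  unfolding pairset_eq by auto

lemma cd_general:
  fixes f :: "'a::linorder \<Rightarrow> 'b::linorder \<Rightarrow> 'c::linorder"
  assumes m1: "\<And>x x' y. x < x' \<Longrightarrow> f x y < f x' y"
    and m2: "\<And>x y y'. y < y' \<Longrightarrow> f x y < f x y'"
  shows "finite X \<Longrightarrow> finite Y \<Longrightarrow> X \<noteq> {} \<Longrightarrow> Y \<noteq> {} \<Longrightarrow>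
    card X + card Y \<le> card {f x y |x y. x \<in> X \<and> y \<in> Y} + 1"
proof (induct "card X" arbitrary: X)
  case 0
  then show ?case by simp
next
  case (Suc n)
  show ?case
  proof (cases "n = 0")
    case True
    then have "card X = 1" using Suc by simp
    then obtain a where X: "X = {a}" by (auto simp: card_Suc_eq)
    have eq: "{f x y |x y. x \<in> X \<and> y \<in> Y} = f a ` Y" using X by auto
    have "inj_on (f a) Y"
    proof (rule inj_onI)
      fix y y' assume "f a y = f a y'"
      then show "y = y'" using m2[of y y' a] m2[of y' y a] by (metis less_irrefl linorder_neqE)
    qed
    then show ?thesis using eq X by (simp add: card_image)
  next
    case False
    define a where "a = Max X"
    have aX: "a \<in> X" using Suc a_def by simp
    define X' where "X' = X - {a}"
    have cX': "card X' = n" using Suc aX X'_def by simp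
    have X'ne: "X' \<noteq> {}" using cX' False by auto
    have fX': "finite X'" using Suc X'_def by simp
    have IH: "card X' + card Y \<le> card {f x y |x y. x \<in> X' \<and> y \<in> Y} + 1"
      using Suc(1)[OF cX'[symmetric] fX' Suc(4) X'ne Suc(6)] .
    define b where "b = Max Y"
    have bY: "b \<in> Y" using Suc b_def by simp
    have sub: "{f x y |x y. x \<in> X' \<and> y \<in> Y} \<subseteq> {f x y |x y. x \<in> X \<and> y \<in> Y}"
      using X'_def by auto
    have notin: "f a b \<notin> {f x y |x y. x \<in> X' \<and> y \<in> Y}"
    proof
      assume "f a b \<in> {f x y |x y. x \<in> X' \<and> y \<in> Y}"
      then obtain x y where xy: "x \<in> X'" "y \<in> Y" "f a b = f x y" by blast
      have "x < a" using xy(1) X'_def a_def Suc(3) by (metis DiffE Max_ge insertCI order_le_less)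
      have "y \<le> b" using xy(2) b_def Suc(4) by simp
      have "f x y < f a y" using m1 \<open>x < a\<close> by blast
      also have "f a y \<le> f a b" using \<open>y \<le> b\<close> m2 by (metis order_le_less)
      finally show False using xy(3) by simp
    qed
    have fin: "finite {f x y |x y. x \<in> X \<and> y \<in> Y}" using Suc by (simp add: finite_pairset)
    have "card {f x y |x y. x \<in> X' \<and> y \<in> Y} + 1 \<le> card {f x y |x y. x \<in> X \<and> y \<in> Y}"
    proof -
      have "insert (f a b) {f x y |x y. x \<in> X' \<and> y \<in> Y} \<subseteq> {f x y |x y. x \<in> X \<and> y \<in> Y}"
        using sub aX bY by blast
      from card_mono[OF fin this] show ?thesis
        using notin finite_subset[OF sub fin] by simp
    qed
    then show ?thesis using IH cX' Suc(2) by linarith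
  qed
qed

definition ps :: "int set \<Rightarrow> int set \<Rightarrow> int \<Rightarrow> int set" where
  "ps A B l = {y + l * x |x y. x \<in> A \<and> y \<in> B}"

lemma ps_finite: "finite A \<Longrightarrow> finite B \<Longrightarrow> finite (ps A B l)"
  unfolding ps_def by (rule finite_pairset)

lemma cd_ps:
  assumes "finite A" "finite B" "A \<noteq> {}" "B \<noteq> {}" "l > 0"
  shows "card A + card B \<le> card (ps A B l) + 1"
  unfolding ps_def
  by (rule cd_general[where f = "\<lambda>x y. y + l * x"]) (use assms in auto)

lemma ps_mono: "A \<subseteq> A' \<Longrightarrow> B \<subseteq> B' \<Longrightarrow> ps A B l \<subseteq> ps A' B' l"
  unfolding ps_def by blast

lemma mod3_shift:
  assumes "m \<ge> (1::nat)"
  shows "(y + 3 ^ m * x) mod 3 = (y::int) mod 3"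
proof -
  obtain m' where "m = Suc m'" using assms by (cases m) auto
  then have "y + 3 ^ m * x = y + (3 ^ m' * x) * 3" by (simp add: algebra_simps)
  then show ?thesis by (metis mod_mult_self1)
qed

lemma reduce3:
  fixes B :: "int set"
  assumes "finite B" "B \<noteq> {}" "\<forall>b\<in>B. b mod 3 = Min B mod 3"
  defines "B' \<equiv> (\<lambda>b. (b - Min B) div 3) ` B"
  shows "B = (\<lambda>z. Min B + 3 * z) ` B'" "card B' = card B" "finite B'" "B' \<noteq> {}"
    "card B \<ge> 2 \<Longrightarrow> nat (Max B' - Min B') < nat (Max B - Min B)"
proof -
  define b0 where "b0 = Min B"
  have rep: "b = b0 + 3 * ((b - b0) div 3)" if "b \<in> B" for b
  proof -
    have "3 dvd (b - b0)" using assms(3) that b0_def by (simp add: mod_eq_dvd_iff)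
    then show ?thesis by auto
  qed
  show B: "B = (\<lambda>z. Min B + 3 * z) ` B'"
    unfolding B'_def image_image using rep b0_def by (auto simp: image_iff)
  have "inj_on (\<lambda>b. (b - Min B) div 3) B"
    by (rule inj_onI) (metis rep b0_def)
  then show "card B' = card B" unfolding B'_def by (rule card_image)
  show "finite B'" "B' \<noteq> {}" using assms unfolding B'_def by auto
  assume c2: "card B \<ge> 2"
  have fB': "finite B'" "B' \<noteq> {}" using assms unfolding B'_def by auto
  have nonneg: "z \<ge> 0" if zB: "z \<in> B'" for z
  proof -
    obtain b where "b \<in> B" "z = (b - Min B) div 3" using zB unfolding B'_def image_iff by blast
    moreover have "Min B \<le> b" using \<open>b \<in> B\<close> assms by simp
    ultimately show ?thesis by simp
  qed
  have "Max B \<noteq> Min B"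
  proof
    assume "Max B = Min B"
    then have "B \<subseteq> {Min B}" using assms by (metis Max_ge Min_le antisym insertI1 subsetI)
    then have "card B \<le> card {Min B}" by (intro card_mono) auto
    then have "card B \<le> 1" by simp
    then show False using c2 by simp
  qed
  moreover have "Min B \<le> Max B" using assms by (simp add: Min_le)
  ultimately have pos: "Max B - Min B > 0" by simp
  have "Max B' \<in> B'" using fB' by simp
  then obtain b where b: "b \<in> B" "Max B' = (b - Min B) div 3" unfolding B'_def by auto
  have "b \<le> Max B" using b assms by simp
  then have "Max B' \<le> (Max B - Min B) div 3" using b by (simp add: zdiv_mono1)
  moreover have "Min B' \<ge> 0" using nonneg fB' by simp
  ultimately have "Max B' - Min B' \<le> (Max B - Min B) div 3" by linarith
  also have "\<dots> < Max B - Min B" using pos by simp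
  finally show "nat (Max B' - Min B') < nat (Max B - Min B)" using pos by simp
qed

lemma ps_affine:
  "ps ((\<lambda>z. a + 3 * z) ` X) ((\<lambda>z. a + 3 * z) ` Y) l = (\<lambda>z. a + l * a + 3 * z) ` ps X Y l"
proof
  show "ps ((\<lambda>z. a + 3 * z) ` X) ((\<lambda>z. a + 3 * z) ` Y) l \<subseteq> (\<lambda>z. a + l * a + 3 * z) ` ps X Y l"
  proof
    fix w assume "w \<in> ps ((\<lambda>z. a + 3 * z) ` X) ((\<lambda>z. a + 3 * z) ` Y) l"
    then obtain x y where "x \<in> X" "y \<in> Y" "w = (a + 3 * y) + l * (a + 3 * x)"
      unfolding ps_def by blast
    then have "w = a + l * a + 3 * (y + l * x)" by (simp add: algebra_simps)
    moreover have "y + l * x \<in> ps X Y l"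
      unfolding ps_def using \<open>x \<in> X\<close> \<open>y \<in> Y\<close> by blast
    ultimately show "w \<in> (\<lambda>z. a + l * a + 3 * z) ` ps X Y l" by blast
  qed
next
  show "(\<lambda>z. a + l * a + 3 * z) ` ps X Y l \<subseteq> ps ((\<lambda>z. a + 3 * z) ` X) ((\<lambda>z. a + 3 * z) ` Y) l"
  proof
    fix w assume "w \<in> (\<lambda>z. a + l * a + 3 * z) ` ps X Y l"
    then obtain x y where "x \<in> X" "y \<in> Y" "w = a + l * a + 3 * (y + l * x)"
      unfolding ps_def by blast
    then have "w = (a + 3 * y) + l * (a + 3 * x)" by (simp add: algebra_simps)
    then show "w \<in> ps ((\<lambda>z. a + 3 * z) ` X) ((\<lambda>z. a + 3 * z) ` Y) l"
      unfolding ps_def using \<open>x \<in> X\<close> \<open>y \<in> Y\<close> by blast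
  qed
qed

lemma card_affine3: "card ((\<lambda>z::int. a + 3 * z) ` X) = card X"
  by (rule card_image) (auto simp: inj_on_def)

lemma card_1_cases: "finite B \<Longrightarrow> B \<noteq> {} \<Longrightarrow> \<not> card B \<ge> 2 \<Longrightarrow> \<exists>a. B = {a}"
proof -
  assume "finite B" "B \<noteq> {}" "\<not> card B \<ge> 2"
  then have "card B = 1" using card_gt_0_iff[of B] by linarith
  then show ?thesis by (auto simp: card_Suc_eq)
qed

lemma sc:
  fixes B :: "int set"
  assumes "finite B" "B \<noteq> {}" "m \<ge> 1"
  shows "3 * card B \<le> card (ps B B (3 ^ m)) + 2"
  using assms(1,2)
proof (induction "nat (Max B - Min B)" arbitrary: B rule: less_induct)
  case less
  show ?case
  proof (cases "\<forall>b\<in>B. b mod 3 = Min B mod 3")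
    case True
    show ?thesis
    proof (cases "card B \<ge> 2")
      case False
      then obtain a where B: "B = {a}" using card_1_cases less by blast
      have "ps B B (3^m) = {a + 3^m * a}" by (auto simp: ps_def B)
      then show ?thesis using B by simp
    next
      case c2: True
      define B' where "B' = (\<lambda>b. (b - Min B) div 3) ` B"
      note R = reduce3[OF less(2) less(3) True, folded B'_def]
      have IH: "3 * card B' \<le> card (ps B' B' (3 ^ m)) + 2"
        using less(1)[OF R(5)[OF c2] R(3) R(4)] .
      have "ps B B (3 ^ m) = (\<lambda>z. Min B + 3 ^ m * Min B + 3 * z) ` ps B' B' (3 ^ m)"
        using ps_affine[of "Min B" B' B' "3 ^ m"] R(1) by simp
      then have "card (ps B B (3 ^ m)) = card (ps B' B' (3 ^ m))"
        by (simp add: card_image inj_on_def)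
      then show ?thesis using IH R(2) by simp
    qed
  next
    case False
    define C where "C = {b \<in> B. b mod 3 = Min B mod 3}"
    define R where "R = B - C"
    have fC: "finite C" "finite R" using less C_def R_def by auto
    have "Min B \<in> C" using less C_def by simp
    then have Cne: "C \<noteq> {}" by blast
    have Rne: "R \<noteq> {}" using False C_def R_def by auto
    have BCR: "B = C \<union> R" "C \<inter> R = {}" using C_def R_def by auto
    have cB: "card B = card C + card R"
      using card_Un_disjoint[OF fC BCR(2)] BCR(1) by simp
    have sub: "ps B C (3 ^ m) \<union> ps B R (3 ^ m) \<subseteq> ps B B (3 ^ m)"
      using ps_mono[of B B C B] ps_mono[of B B R B] C_def R_def by auto
    have disj: "ps B C (3 ^ m) \<inter> ps B R (3 ^ m) = {}"
    proof -
      have "w mod 3 = Min B mod 3" if "w \<in> ps B C (3 ^ m)" for w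
        using that mod3_shift[OF assms(3)] unfolding ps_def C_def by auto
      moreover have "w mod 3 \<noteq> Min B mod 3" if "w \<in> ps B R (3 ^ m)" for w
        using that mod3_shift[OF assms(3)] unfolding ps_def C_def R_def by auto
      ultimately show ?thesis by blast
    qed
    have f1: "finite (ps B C (3 ^ m))" "finite (ps B R (3 ^ m))" "finite (ps B B (3 ^ m))"
      using less fC by (auto intro: ps_finite)
    have "card (ps B C (3 ^ m)) + card (ps B R (3 ^ m)) \<le> card (ps B B (3 ^ m))"
      using card_mono[OF f1(3) sub] card_Un_disjoint[OF f1(1,2) disj] by simp
    moreover have "card B + card C \<le> card (ps B C (3 ^ m)) + 1"
      using cd_ps[OF less(2) fC(1) less(3) Cne] by simp
    moreover have "card B + card R \<le> card (ps B R (3 ^ m)) + 1"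
      using cd_ps[OF less(2) fC(2) less(3) Rne] by simp
    ultimately show ?thesis using cB by linarith
  qed
qed

lemma mod3_lemma:
  fixes r s :: int
  assumes "s mod 3 \<noteq> r mod 3"
  shows "(r + s) mod 3 \<noteq> (r + r) mod 3"
proof
  assume "(r + s) mod 3 = (r + r) mod 3"
  then have "(r + s - (r + r)) mod 3 = 0" by (simp add: mod_diff_cong mod_eq_dvd_iff)
  then have "(s - r) mod 3 = 0" by simp
  then show False using assms by (simp add: mod_eq_dvd_iff dvd_eq_mod_eq_0[symmetric])
qed

lemma core:
  fixes A :: "int set"
  assumes "finite A" "A \<noteq> {}" "m \<ge> 1"
  shows "7 * card A \<le> 2 * card (ps A A 1) + 2 * card (A \<union> (\<lambda>a. 3 ^ m * a + c) ` A) + 4"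
  using assms(1,2)
proof (induction "nat (Max A - Min A)" arbitrary: A c rule: less_induct)
  case less
  have fA: "finite A" "A \<noteq> {}" by fact+
  have Usub: "card A \<le> card (A \<union> (\<lambda>a. 3 ^ m * a + c) ` A)"
    using fA by (intro card_mono) auto
  show ?case
  proof (cases "\<forall>a\<in>A. a mod 3 = c mod 3")
    case True
    have True': "\<forall>b\<in>A. b mod 3 = Min A mod 3" using True fA by simp
    show ?thesis
    proof (cases "card A \<ge> 2")
      case False
      then obtain a where B: "A = {a}" using card_1_cases fA by blast
      have "ps A A 1 = {a + a}" by (auto simp: ps_def B)
      then show ?thesis using B Usub by simp
    next
      case c2: True
      define a0 where "a0 = Min A"
      define A' where "A' = (\<lambda>b. (b - Min A) div 3) ` A"
      note R = reduce3[OF fA True', folded A'_def]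
      define c' where "c' = (3 ^ m * a0 + c - a0) div 3"
      have dv: "3 dvd (3 ^ m * a0 + c - a0)"
      proof -
        have "3 dvd (3::int) ^ m" using assms(3) by (simp add: dvd_power)
        then have "3 dvd 3 ^ m * a0" by simp
        moreover have "3 dvd (c - a0)"
        proof -
          have "Min A \<in> A" using fA by simp
          then have "c mod 3 = a0 mod 3" using True a0_def by simp
          then show ?thesis by (simp add: mod_eq_dvd_iff)
        qed
        ultimately show ?thesis by (metis add_diff_eq dvd_add)
      qed
      then have c'eq: "3 * c' = 3 ^ m * a0 + c - a0" unfolding c'_def by simp
      have IH: "7 * card A' \<le> 2 * card (ps A' A' 1) + 2 * card (A' \<union> (\<lambda>a. 3 ^ m * a + c') ` A') + 4"
        using less(1)[OF R(5)[OF c2] R(3) R(4)] .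
      have e1: "ps A A 1 = (\<lambda>z. a0 + 1 * a0 + 3 * z) ` ps A' A' 1"
        using ps_affine[of a0 A' A' 1] R(1) a0_def by simp
      have e2: "A \<union> (\<lambda>a. 3 ^ m * a + c) ` A = (\<lambda>z. a0 + 3 * z) ` (A' \<union> (\<lambda>a. 3 ^ m * a + c') ` A')"
      proof -
        have "(\<lambda>a. 3 ^ m * a + c) ` A = (\<lambda>z. a0 + 3 * z) ` ((\<lambda>a. 3 ^ m * a + c') ` A')"
        proof -
          have "(\<lambda>a. 3 ^ m * a + c) ` A = (\<lambda>z. 3 ^ m * (a0 + 3 * z) + c) ` A'"
            by (subst R(1)) (simp add: image_image a0_def)
          also have "\<dots> = (\<lambda>z. a0 + 3 * (3 ^ m * z + c')) ` A'"
          proof (rule image_cong[OF refl])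
            fix z show "3 ^ m * (a0 + 3 * z) + c = a0 + 3 * (3 ^ m * z + c')"
              using c'eq by (simp add: algebra_simps)
          qed
          finally show ?thesis by (simp add: image_image)
        qed
        then show ?thesis using R(1) a0_def by (simp add: image_Un)
      qed
      have "card (ps A A 1) = card (ps A' A' 1)"
        unfolding e1 by (rule card_image) (auto simp: inj_on_def)
      moreover have "card (A \<union> (\<lambda>a. 3 ^ m * a + c) ` A) = card (A' \<union> (\<lambda>a. 3 ^ m * a + c') ` A')"
        unfolding e2 by (rule card_affine3)
      ultimately show ?thesis using IH R(2) by simp
    qed
  next
    case False
    define f where "f = (\<lambda>a::int. 3 ^ m * a + c)"
    define C where "C = {a \<in> A. a mod 3 = c mod 3}"
    define R where "R = A - C"
    have fC: "finite C" "finite R" using fA C_def R_def by auto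
    have Rne: "R \<noteq> {}" using False C_def R_def by auto
    have BCR: "A = C \<union> R" "C \<inter> R = {}" using C_def R_def by auto
    have cA: "card A = card C + card R"
      using card_Un_disjoint[OF fC BCR(2)] BCR(1) by simp
    have fmod: "f a mod 3 = c mod 3" for a
      using mod3_shift[OF assms(3), of c a] unfolding f_def by (simp add: add.commute)
    have disj1: "f ` A \<inter> R = {}" using fmod R_def C_def by auto
    have injf: "inj_on f A" unfolding f_def by (auto simp: inj_on_def)
    have "card (f ` A \<union> R) = card A + card R"
      using card_Un_disjoint[OF finite_imageI[OF fA(1)] fC(2) disj1] card_image[OF injf] by simp
    moreover have "card (f ` A \<union> R) \<le> card (A \<union> f ` A)"
      using fA R_def by (intro card_mono) auto
    ultimately have U: "card A + card R \<le> card (A \<union> f ` A)" by simp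
    have P1: "2 * card A \<le> card (ps A A 1) + 1" using cd_ps[OF fA(1) fA(1) fA(2) fA(2), of 1] by simp
    show ?thesis
    proof (cases "C = {}")
      case True
      then have "R = A" using R_def by simp
      then have "2 * card A \<le> card (A \<union> f ` A)" using U by simp
      then show ?thesis using P1 unfolding f_def by linarith
    next
      case Cne: False
      have sub: "ps C C 1 \<union> ps R C 1 \<subseteq> ps A A 1"
        using ps_mono[of C A C A] ps_mono[of R A C A] C_def R_def by auto
      have disj: "ps C C 1 \<inter> ps R C 1 = {}"
      proof -
        have "w mod 3 = (c + c) mod 3" if wC: "w \<in> ps C C 1" for w
        proof -
          obtain x y where xy: "x \<in> C" "y \<in> C" "w = y + 1 * x" using wC unfolding ps_def by blast
          have "y mod 3 = c mod 3" "x mod 3 = c mod 3" using xy C_def by auto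
          then show ?thesis using xy by (metis mod_add_cong mult_1)
        qed
        moreover have "w mod 3 \<noteq> (c + c) mod 3" if wR: "w \<in> ps R C 1" for w
        proof -
          obtain x y where xy: "x \<in> R" "y \<in> C" "w = y + 1 * x" using wR unfolding ps_def by blast
          have "y mod 3 = c mod 3" "x mod 3 \<noteq> c mod 3" using xy C_def R_def by auto
          then have "(c + x) mod 3 \<noteq> (c + c) mod 3" using mod3_lemma by blast
          moreover have "w mod 3 = (c + x) mod 3"
            using xy \<open>y mod 3 = c mod 3\<close> by (metis mod_add_cong mult_1)
          ultimately show ?thesis by simp
        qed
        ultimately show ?thesis by blast
      qed
      have f1: "finite (ps C C 1)" "finite (ps R C 1)" "finite (ps A A 1)"
        using fA fC by (auto intro: ps_finite)
      have P2: "card (ps C C 1) + card (ps R C 1) \<le> card (ps A A 1)"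
        using card_mono[OF f1(3) sub] card_Un_disjoint[OF f1(1,2) disj] by simp
      have P3: "2 * card C \<le> card (ps C C 1) + 1" using cd_ps[OF fC(1) fC(1) Cne Cne, of 1] by simp
      have P4: "card R + card C \<le> card (ps R C 1) + 1" using cd_ps[OF fC(2) fC(1) Rne Cne, of 1] by simp
      show ?thesis
      proof (cases "card R \<le> card C")
        case True
        then show ?thesis using U P2 P3 P4 cA unfolding f_def by linarith
      next
        case False
        then show ?thesis using U P1 cA unfolding f_def by linarith
      qed
    qed
  qed
qed

lemma bsp_mult_simp: "bsp_mult (m, x) (n, y) = (m + n, y + 3 ^ n * x)"
  by (simp add: bsp_mult_def)

lemma set_square_finite: "finite S \<Longrightarrow> finite (set_square S)"
proof -
  assume "finite S"
  have "set_square S = (\<lambda>(s, t). bsp_mult s t) ` (S \<times> S)"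
    unfolding set_square_def by auto
  then show ?thesis using \<open>finite S\<close> by simp
qed

lemma sq_mem: "s \<in> S \<Longrightarrow> t \<in> S \<Longrightarrow> bsp_mult s t \<in> set_square S"
  unfolding set_square_def by blast

lemma set_square_mono: "S \<subseteq> S' \<Longrightarrow> set_square S \<subseteq> set_square S'"
  unfolding set_square_def by blast

lemma card_Pair_image: "card (Pair c ` X) = card X"
  by (rule card_image) (auto simp: inj_on_def)

lemma two_cosets:
  assumes fin: "finite S" and fs: "fst ` S = {m0, m1}" and lt: "m0 < m1"
  shows "7 * card S \<le> 2 * card (set_square S) + 12"
proof -
  define A0 where "A0 = Pair m0 -` S"
  define A1 where "A1 = Pair m1 -` S"
  have fA: "finite A0" "finite A1" unfolding A0_def A1_def
    by (auto intro!: finite_vimageI fin simp: inj_on_def)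
  have neA: "A0 \<noteq> {}" "A1 \<noteq> {}"
  proof -
    have "m0 \<in> fst ` S" "m1 \<in> fst ` S" using fs by auto
    then show "A0 \<noteq> {}" "A1 \<noteq> {}" unfolding A0_def A1_def by force+
  qed
  have Sdec: "S = Pair m0 ` A0 \<union> Pair m1 ` A1"
  proof
    show "S \<subseteq> Pair m0 ` A0 \<union> Pair m1 ` A1"
    proof
      fix p assume "p \<in> S"
      then have "fst p = m0 \<or> fst p = m1" using fs by auto
      then show "p \<in> Pair m0 ` A0 \<union> Pair m1 ` A1"
        using \<open>p \<in> S\<close> unfolding A0_def A1_def by (cases p) auto
    qed
  qed (auto simp: A0_def A1_def)
  have cS: "card S = card A0 + card A1"
  proof -
    have "Pair m0 ` A0 \<inter> Pair m1 ` A1 = {}" using lt by auto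
    then have "card S = card (Pair m0 ` A0) + card (Pair m1 ` A1)"
      using Sdec fA by (simp add: card_Un_disjoint)
    then show ?thesis by (simp add: card_Pair_image)
  qed
  define X0 where "X0 = Pair (m0 + m0) ` ps A0 A0 (3 ^ m0)"
  define X1 where "X1 = Pair (m0 + m1) ` (ps A0 A1 (3 ^ m1) \<union> ps A1 A0 (3 ^ m0))"
  define X2 where "X2 = Pair (m1 + m1) ` ps A1 A1 (3 ^ m1)"
  have sub: "X0 \<union> X1 \<union> X2 \<subseteq> set_square S"
  proof -
    have "X0 \<subseteq> set_square S"
    proof
      fix p assume "p \<in> X0"
      then obtain x y where "x \<in> A0" "y \<in> A0" "p = (m0 + m0, y + 3 ^ m0 * x)"
        unfolding X0_def ps_def by auto
      then have "p = bsp_mult (m0, x) (m0, y)" by (simp add: bsp_mult_simp)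
      then show "p \<in> set_square S" using \<open>x \<in> A0\<close> \<open>y \<in> A0\<close> sq_mem unfolding A0_def by auto
    qed
    moreover have "X1 \<subseteq> set_square S"
    proof
      fix p assume "p \<in> X1"
      then consider (a) x y where "x \<in> A0" "y \<in> A1" "p = (m0 + m1, y + 3 ^ m1 * x)"
        | (b) x y where "x \<in> A1" "y \<in> A0" "p = (m0 + m1, y + 3 ^ m0 * x)"
        unfolding X1_def ps_def by auto
      then show "p \<in> set_square S"
      proof cases
        case a
        then have "p = bsp_mult (m0, x) (m1, y)" by (simp add: bsp_mult_simp)
        then show ?thesis using a sq_mem unfolding A0_def A1_def by auto
      next
        case b
        then have "p = bsp_mult (m1, x) (m0, y)" by (simp add: bsp_mult_simp add.commute)
        then show ?thesis using b sq_mem unfolding A0_def A1_def by auto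
      qed
    qed
    moreover have "X2 \<subseteq> set_square S"
    proof
      fix p assume "p \<in> X2"
      then obtain x y where "x \<in> A1" "y \<in> A1" "p = (m1 + m1, y + 3 ^ m1 * x)"
        unfolding X2_def ps_def by auto
      then have "p = bsp_mult (m1, x) (m1, y)" by (simp add: bsp_mult_simp)
      then show "p \<in> set_square S" using \<open>x \<in> A1\<close> \<open>y \<in> A1\<close> sq_mem unfolding A1_def by auto
    qed
    ultimately show ?thesis by blast
  qed
  have fX: "finite X0" "finite X1" "finite X2" unfolding X0_def X1_def X2_def
    using fA by (auto intro: ps_finite)
  have d1: "X0 \<inter> X1 = {}" "(X0 \<union> X1) \<inter> X2 = {}" unfolding X0_def X1_def X2_def using lt by auto
  have "card X0 + card X1 + card X2 \<le> card (set_square S)"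
    using card_mono[OF set_square_finite[OF fin] sub] card_Un_disjoint[OF fX(1,2) d1(1)]
      card_Un_disjoint[OF _ fX(3) d1(2)] fX by simp
  then have main: "card (ps A0 A0 (3 ^ m0)) + card (ps A0 A1 (3 ^ m1) \<union> ps A1 A0 (3 ^ m0))
      + card (ps A1 A1 (3 ^ m1)) \<le> card (set_square S)"
    unfolding X0_def X1_def X2_def card_Pair_image .
  have m1pos: "m1 \<ge> 1" using lt by simp
  have sc1: "3 * card A1 \<le> card (ps A1 A1 (3 ^ m1)) + 2" using sc[OF fA(2) neA(2) m1pos] .
  show ?thesis
  proof (cases "m0 = 0")
    case True
    define D where "D = A0 \<union> (\<lambda>a. 3 ^ m1 * a + 0) ` A0"
    have fD: "finite D" "D \<noteq> {}" using fA neA unfolding D_def by auto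
    have "ps D A1 1 \<subseteq> ps A0 A1 (3 ^ m1) \<union> ps A1 A0 (3 ^ m0)"
    proof
      fix w assume "w \<in> ps D A1 1"
      then obtain x y where xy: "x \<in> D" "y \<in> A1" "w = y + 1 * x" unfolding ps_def by blast
      show "w \<in> ps A0 A1 (3 ^ m1) \<union> ps A1 A0 (3 ^ m0)"
      proof (cases "x \<in> A0")
        case True
        then have "w = x + 3 ^ m0 * y" using xy \<open>m0 = 0\<close> by simp
        then show ?thesis using True xy unfolding ps_def by blast
      next
        case False
        then obtain a where "a \<in> A0" "x = 3 ^ m1 * a" using xy D_def by auto
        then have "w = y + 3 ^ m1 * a" using xy by simp
        then show ?thesis using \<open>a \<in> A0\<close> xy unfolding ps_def by blast
      qed
    qed
    then have "card (ps D A1 1) \<le> card (ps A0 A1 (3 ^ m1) \<union> ps A1 A0 (3 ^ m0))"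
      using fA by (intro card_mono) (auto intro: ps_finite)
    moreover have "card D + card A1 \<le> card (ps D A1 1) + 1"
      using cd_ps[OF fD(1) fA(2) fD(2) neA(2), of 1] by simp
    moreover have "7 * card A0 \<le> 2 * card (ps A0 A0 1) + 2 * card D + 4"
      using core[OF fA(1) neA(1) m1pos, of 0] unfolding D_def .
    ultimately show ?thesis using main sc1 cS True by simp
  next
    case False
    then have m0pos: "m0 \<ge> 1" by simp
    have "3 * card A0 \<le> card (ps A0 A0 (3 ^ m0)) + 2" using sc[OF fA(1) neA(1) m0pos] .
    moreover have "card A0 + card A1 \<le> card (ps A0 A1 (3 ^ m1)) + 1"
      using cd_ps[OF fA neA, of "3 ^ m1"] by simp
    moreover have "card (ps A0 A1 (3 ^ m1)) \<le> card (ps A0 A1 (3 ^ m1) \<union> ps A1 A0 (3 ^ m0))"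
      using fA by (intro card_mono) (auto intro: ps_finite)
    ultimately show ?thesis using main sc1 cS by linarith
  qed
qed

definition Yf :: "bsp \<Rightarrow> bsp \<Rightarrow> int" where
  "Yf u s = (3 ^ fst u - 1) * snd s - snd u * (3 ^ fst s - 1)"

lemma Yf_mult: "Yf u (bsp_mult a b) = Yf u b + 3 ^ fst b * Yf u a"
  by (cases a; cases b) (simp add: Yf_def bsp_mult_simp power_add algebra_simps)

lemma Yf_self: "Yf u u = 0"
  by (simp add: Yf_def algebra_simps)

lemma pow3_gt1: "m \<ge> (1::nat) \<Longrightarrow> (3::int) ^ m > 1"
  by (simp add: one_less_power)

lemma Yf_inj:
  assumes "fst u \<ge> 1" "fst a = fst b" "Yf u a = Yf u b"
  shows "a = b"
proof -
  have W: "(3::int) ^ fst u - 1 \<noteq> 0" using pow3_gt1[OF assms(1)] by simp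
  have "(3 ^ fst u - 1) * snd a = (3 ^ fst u - 1) * snd b"
    using assms(2,3) by (simp add: Yf_def)
  then have "snd a = snd b" using W by simp
  then show ?thesis using assms(2) by (simp add: prod_eq_iff)
qed

lemma Yf_comm: "bsp_mult s u = bsp_mult u s \<longleftrightarrow> Yf u s = 0"
  by (cases s; cases u) (auto simp: Yf_def bsp_mult_simp algebra_simps)

lemma Yf_zero_comm:
  assumes "fst u \<ge> 1" "Yf u a = 0" "Yf u b = 0"
  shows "bsp_mult a b = bsp_mult b a"
proof -
  obtain ma xa mb xb mu xu where ab: "a = (ma, xa)" "b = (mb, xb)" "u = (mu, xu)"
    by (cases a; cases b; cases u) auto
  define W :: int where "W = 3 ^ mu - 1"
  have "mu \<ge> 1" using assms(1) ab by simp
  then have "(3::int) ^ mu > 1" by (rule pow3_gt1)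
  then have W: "W \<noteq> 0" by (simp add: W_def)
  have e1: "W * xa = xu * (3 ^ ma - 1)" and e2: "W * xb = xu * (3 ^ mb - 1)"
    using assms(2,3) ab W_def by (auto simp: Yf_def)
  have "W * (xa * (3 ^ mb - 1)) = W * (xb * (3 ^ ma - 1))"
  proof -
    have "W * (xa * (3 ^ mb - 1)) = (W * xa) * (3 ^ mb - 1)" by (simp add: algebra_simps)
    also have "\<dots> = xu * (3 ^ ma - 1) * (3 ^ mb - 1)" using e1 by simp
    also have "\<dots> = xu * (3 ^ mb - 1) * (3 ^ ma - 1)" by (simp add: algebra_simps)
    also have "\<dots> = (W * xb) * (3 ^ ma - 1)" using e2 by simp
    finally show ?thesis by (simp add: algebra_simps)
  qed
  then have "xa * (3 ^ mb - 1) = xb * (3 ^ ma - 1)" using W by simp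
  then have "xb + 3 ^ mb * xa = xa + 3 ^ ma * xb" by (simp add: algebra_simps)
  then show ?thesis using ab by (simp add: bsp_mult_simp add.commute)
qed

lemma sq_elem: "p \<in> set_square S \<Longrightarrow> \<exists>a\<in>S. \<exists>b\<in>S. p = bsp_mult a b"
  unfolding set_square_def by blast

lemma fst_mult: "fst (bsp_mult a b) = fst a + fst b"
  by (cases a; cases b) (simp add: bsp_mult_simp)

lemma snd_mult: "snd (bsp_mult a b) = snd b + 3 ^ fst b * snd a"
  by (cases a; cases b) (simp add: bsp_mult_simp)

lemma abelian_plus_one:
  assumes fin: "finite S" and uS: "u \<in> S"
    and Lc: "\<forall>a\<in>S - {u}. \<forall>b\<in>S - {u}. bsp_mult a b = bsp_mult b a"
    and z: "z \<in> S - {u}" "fst z \<ge> 1"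
    and nab: "\<exists>a\<in>S. \<exists>b\<in>S. bsp_mult a b \<noteq> bsp_mult b a"
  shows "4 * card (S - {u}) \<le> card (set_square S) + 1"
proof -
  define L where "L = S - {u}"
  have fL: "finite L" using fin L_def by simp
  have Y0: "Yf z s = 0" if "s \<in> L" for s
    using Lc that z(1) Yf_comm[of s z] unfolding L_def by blast
  have Yu: "Yf z u \<noteq> 0"
  proof
    assume "Yf z u = 0"
    then have "\<forall>s\<in>S. Yf z s = 0" using Y0 L_def by auto
    then show False using nab Yf_zero_comm[OF z(2)] by blast
  qed
  have finj: "inj_on fst L"
    by (rule inj_onI) (metis Y0 Yf_inj z(2))
  define P where "P = set_square L"
  have PY: "Yf z p = 0" if "p \<in> P" for p
    using that sq_elem[of p L] Y0 unfolding P_def by (auto simp: Yf_mult)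
  have fstP: "fst ` P = {x + y |x y. x \<in> fst ` L \<and> y \<in> fst ` L}"
  proof
    show "fst ` P \<subseteq> {x + y |x y. x \<in> fst ` L \<and> y \<in> fst ` L}"
    proof
      fix n assume "n \<in> fst ` P"
      then obtain p where "p \<in> P" "n = fst p" by auto
      then obtain a b where "a \<in> L" "b \<in> L" "p = bsp_mult a b" using sq_elem unfolding P_def by blast
      then have "n = fst a + fst b" using \<open>n = fst p\<close> by (simp add: fst_mult)
      then show "n \<in> {x + y |x y. x \<in> fst ` L \<and> y \<in> fst ` L}" using \<open>a \<in> L\<close> \<open>b \<in> L\<close> by blast
    qed
  next
    show "{x + y |x y. x \<in> fst ` L \<and> y \<in> fst ` L} \<subseteq> fst ` P"
    proof
      fix n assume "n \<in> {x + y |x y. x \<in> fst ` L \<and> y \<in> fst ` L}"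
      then obtain a b where "a \<in> L" "b \<in> L" "n = fst a + fst b" by blast
      then have "n = fst (bsp_mult a b)" "bsp_mult a b \<in> P" unfolding P_def by (auto simp: fst_mult sq_mem)
      then show "n \<in> fst ` P" by blast
    qed
  qed
  have Lne: "L \<noteq> {}" using z L_def by auto
  have "card (fst ` L) + card (fst ` L) \<le> card {x + y |x y. x \<in> fst ` L \<and> y \<in> fst ` L} + 1"
    by (rule cd_general[where f = "(+)"]) (use fL Lne in auto)
  then have cP: "2 * card L \<le> card P + 1"
  proof -
    assume h: "card (fst ` L) + card (fst ` L) \<le> card {x + y |x y. x \<in> fst ` L \<and> y \<in> fst ` L} + 1"
    have "card (fst ` P) \<le> card P" using set_square_finite[OF fL] P_def by (simp add: card_image_le)
    then show ?thesis using h fstP card_image[OF finj] by simp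
  qed
  define N1 where "N1 = (\<lambda>s. bsp_mult u s) ` L"
  define L1 where "L1 = {s \<in> L. fst s \<ge> 1}"
  define N2 where "N2 = (\<lambda>s. bsp_mult s u) ` L1"
  define N3 where "N3 = {bsp_mult u u}"
  have N1Y: "Yf z q = 3 ^ fst s * Yf z u" if "q = bsp_mult u s" "s \<in> L" for q s
    using that Y0 by (simp add: Yf_mult)
  have N2Y: "Yf z q = Yf z u" if "q = bsp_mult s u" "s \<in> L" for q s
    using that Y0 by (simp add: Yf_mult)
  have cN1: "card N1 = card L"
    unfolding N1_def
  proof (rule card_image, rule inj_onI)
    fix s s' assume "s \<in> L" "s' \<in> L" "bsp_mult u s = bsp_mult u s'"
    then have "fst s = fst s'" using fst_mult[of u s] fst_mult[of u s'] by simp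
    then show "s = s'" using finj \<open>s \<in> L\<close> \<open>s' \<in> L\<close> by (auto dest: inj_onD)
  qed
  have cN2: "card N2 = card L1"
    unfolding N2_def
  proof (rule card_image, rule inj_onI)
    fix s s' assume "s \<in> L1" "s' \<in> L1" "bsp_mult s u = bsp_mult s' u"
    then have "fst s = fst s'" using fst_mult[of s u] fst_mult[of s' u] by simp
    then show "s = s'" using finj \<open>s \<in> L1\<close> \<open>s' \<in> L1\<close> L1_def by (auto dest: inj_onD)
  qed
  have cL1: "card L \<le> card L1 + 1"
  proof -
    have "L - L1 \<subseteq> {s \<in> L. fst s = 0}" using L1_def by auto
    moreover have "card {s \<in> L. fst s = 0} \<le> 1"
    proof -
      have "\<forall>x\<in>{s \<in> L. fst s = 0}. \<forall>y\<in>{s \<in> L. fst s = 0}. x = y"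
      proof (intro ballI)
        fix x y assume "x \<in> {s \<in> L. fst s = 0}" "y \<in> {s \<in> L. fst s = 0}"
        then show "x = y" using inj_onD[OF finj, of x y] by simp
      qed
      then show ?thesis using card_le_Suc0_iff_eq[of "{s \<in> L. fst s = 0}"] fL by simp
    qed
    ultimately have "card (L - L1) \<le> 1"
      using card_mono[of "{s \<in> L. fst s = 0}" "L - L1"] fL by simp
    moreover have "card L = card L1 + card (L - L1)"
    proof -
      have "L = L1 \<union> (L - L1)" "L1 \<inter> (L - L1) = {}" using L1_def by auto
      moreover have "finite L1" "finite (L - L1)" using fL L1_def by auto
      ultimately show ?thesis by (metis card_Un_disjoint)
    qed
    ultimately show ?thesis by simp
  qed
  have fN: "finite P" "finite N1" "finite N2" "finite N3"
    using fL set_square_finite[OF fL] P_def N1_def N2_def N3_def L1_def by auto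
  have Yfu: "fst u \<ge> 0" by simp
  have d1: "P \<inter> N1 = {}"
  proof -
    have "Yf z q \<noteq> 0" if qN: "q \<in> N1" for q
    proof -
      obtain s where "s \<in> L" "q = bsp_mult u s" using qN unfolding N1_def by auto
      then have "Yf z q = 3 ^ fst s * Yf z u" using N1Y by blast
      then show ?thesis using Yu by simp
    qed
    then show ?thesis using PY by blast
  qed
  have d2: "(P \<union> N1) \<inter> N2 = {}"
  proof -
    have "q \<notin> P" if "q \<in> N2" for q using that N2Y Yu PY unfolding N2_def L1_def by fastforce
    moreover have "q \<notin> N1" if "q \<in> N2" for q
    proof
      assume "q \<in> N1"
      then obtain s where s: "s \<in> L" "q = bsp_mult u s" unfolding N1_def by auto
      obtain s' where s': "s' \<in> L1" "q = bsp_mult s' u" using \<open>q \<in> N2\<close> unfolding N2_def by auto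
      have "fst (bsp_mult u s) = fst (bsp_mult s' u)" using s s' by simp
      then have "fst s = fst s'" by (simp add: fst_mult)
      then have "s = s'" using finj s s' L1_def by (auto dest: inj_onD)
      have "3 ^ fst s * Yf z u = Yf z u" using N1Y[OF s(2,1)] N2Y[of q s'] s' L1_def by auto
      moreover have "(3::int) ^ fst s > 1" using pow3_gt1 s' \<open>s = s'\<close> L1_def by auto
      ultimately show False using Yu by simp
    qed
    ultimately show ?thesis by blast
  qed
  have d3: "(P \<union> N1 \<union> N2) \<inter> N3 = {}"
  proof -
    have Yuu: "Yf z (bsp_mult u u) = (1 + 3 ^ fst u) * Yf z u" by (simp add: Yf_mult algebra_simps)
    have "(1 + 3 ^ fst u :: int) > 0" by (simp add: add_pos_pos)
    then have "Yf z (bsp_mult u u) \<noteq> 0" using Yuu Yu by simp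
    then have "bsp_mult u u \<notin> P" using PY by blast
    moreover have "bsp_mult u u \<notin> N1"
    proof
      assume "bsp_mult u u \<in> N1"
      then obtain s where s: "s \<in> L" "bsp_mult u u = bsp_mult u s" unfolding N1_def by auto
      then have "fst s = fst u" using fst_mult[of u u] fst_mult[of u s] by simp
      then have "(1 + 3 ^ fst u) * Yf z u = 3 ^ fst u * Yf z u" using N1Y[OF s(2) s(1)] Yuu by simp
      then show False using Yu by (simp add: algebra_simps)
    qed
    moreover have "bsp_mult u u \<notin> N2"
    proof
      assume "bsp_mult u u \<in> N2"
      then obtain s where s: "s \<in> L" "bsp_mult u u = bsp_mult s u" unfolding N2_def L1_def by auto
      then have "(1 + 3 ^ fst u) * Yf z u = Yf z u" using N2Y[OF s(2) s(1)] Yuu by simp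
      then show False using Yu by (simp add: algebra_simps)
    qed
    ultimately show ?thesis unfolding N3_def by blast
  qed
  have sub: "P \<union> N1 \<union> N2 \<union> N3 \<subseteq> set_square S"
  proof -
    have "P \<subseteq> set_square S" unfolding P_def L_def by (rule set_square_mono) auto
    moreover have "N1 \<subseteq> set_square S" unfolding N1_def L_def using uS by (auto intro: sq_mem)
    moreover have "N2 \<subseteq> set_square S" unfolding N2_def L1_def L_def using uS by (auto intro: sq_mem)
    moreover have "N3 \<subseteq> set_square S" unfolding N3_def using uS by (auto intro: sq_mem)
    ultimately show ?thesis by blast
  qed
  have "card (P \<union> N1 \<union> N2 \<union> N3) = card P + card N1 + card N2 + card N3"
    using fN d1 d2 d3 by (simp add: card_Un_disjoint)
  moreover have "card (P \<union> N1 \<union> N2 \<union> N3) \<le> card (set_square S)"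
    using card_mono[OF set_square_finite[OF fin] sub] .
  moreover have "card N3 = 1" unfolding N3_def by simp
  ultimately have "4 * card L \<le> card (set_square S) + 1" using cP cN1 cN2 cL1 by linarith
  then show ?thesis using L_def by simp
qed

lemma four_new:
  assumes fin: "finite S" and LS: "L \<subseteq> S"
    and sub: "{e1, e2, e3, e4} \<subseteq> set_square S"
    and dis: "{e1, e2, e3, e4} \<inter> set_square L = {}"
    and d: "distinct [e1, e2, e3, e4]"
  shows "card (set_square L) + 4 \<le> card (set_square S)"
proof -
  have f: "finite (set_square S)" by (rule set_square_finite[OF fin])
  have fL: "finite (set_square L)" using fin LS finite_subset set_square_finite by blast
  have "set_square L \<union> {e1, e2, e3, e4} \<subseteq> set_square S"
    using sub set_square_mono[OF LS] by blast
  then have "card (set_square L \<union> {e1, e2, e3, e4}) \<le> card (set_square S)"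
    by (rule card_mono[OF f])
  moreover have "card (set_square L \<union> {e1, e2, e3, e4}) = card (set_square L) + card {e1, e2, e3, e4}"
  proof -
    have "finite {e1, e2, e3, e4}" by simp
    moreover have "set_square L \<inter> {e1, e2, e3, e4} = {}" using dis by blast
    ultimately show ?thesis using card_Un_disjoint[OF fL] by blast
  qed
  moreover have "card {e1, e2, e3, e4} = 4" using d by simp
  ultimately show ?thesis by simp
qed

lemma claimT:
  assumes fin: "finite S" and uS: "u \<in> S"
    and umax: "\<forall>s\<in>S. fst s \<le> fst u" and umax2: "\<forall>s\<in>S. fst s = fst u \<longrightarrow> snd s \<le> snd u"
    and three: "card (fst ` S) \<ge> 3"
    and nab: "\<exists>a\<in>S - {u}. \<exists>b\<in>S - {u}. bsp_mult a b \<noteq> bsp_mult b a"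
  shows "card (set_square (S - {u})) + 4 \<le> card (set_square S)"
proof -
  define L where "L = S - {u}"
  define mt where "mt = fst u"
  define xu where "xu = snd u"
  have u_eq: "u = (mt, xu)" unfolding mt_def xu_def by simp
  have LS: "L \<subseteq> S" unfolding L_def by auto
  define M1 where "M1 = fst ` S - {mt}"
  have fM1: "finite M1" using fin M1_def by simp
  have cM1: "card M1 \<ge> 2"
  proof -
    have "mt \<in> fst ` S" using uS mt_def by simp
    then have "card M1 = card (fst ` S) - 1" unfolding M1_def using fin by simp
    then show ?thesis using three by simp
  qed
  have M1ne: "M1 \<noteq> {}" using cM1 by auto
  define m1 where "m1 = Max M1"
  have m1M: "m1 \<in> M1" using fM1 M1ne m1_def by simp
  define M2 where "M2 = M1 - {m1}"
  have fM2: "finite M2" using fM1 M2_def by simp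
  have M2ne: "M2 \<noteq> {}"
  proof
    assume "M2 = {}"
    then have "M1 \<subseteq> {m1}" using M2_def by auto
    then have "card M1 \<le> 1" using card_mono[of "{m1}" M1] by simp
    then show False using cM1 by simp
  qed
  define m2 where "m2 = Max M2"
  have m2M: "m2 \<in> M2" using fM2 M2ne m2_def by simp
  have le_mt: "fst s \<le> mt" if "s \<in> S" for s using umax that mt_def by simp
  have m1_lt: "m1 < mt" using m1M M1_def le_mt by force
  have m2_lt: "m2 < m1"
  proof -
    have "m2 \<le> m1" using m2M M2_def m1_def fM1 by simp
    moreover have "m2 \<noteq> m1" using m2M M2_def by simp
    ultimately show ?thesis by simp
  qed
  have le_m1: "fst s \<le> m1" if "s \<in> S" "fst s \<noteq> mt" for s
    using that M1_def m1_def fM1 by simp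
  have le_m2: "fst s \<le> m2" if "s \<in> S" "fst s \<noteq> mt" "fst s \<noteq> m1" for s
    using that M1_def M2_def m2_def fM2 by simp
  obtain s1 where s1: "s1 \<in> S" "fst s1 = m1" using m1M M1_def by auto
  obtain s2 where s2: "s2 \<in> S" "fst s2 = m2" using m2M M2_def M1_def by auto
  have mt1: "mt \<ge> 1" using m1_lt by simp
  have lam: "(3::int) ^ mt > 1" using pow3_gt1[OF mt1] .
  have sqL: "\<exists>a\<in>L. \<exists>b\<in>L. p = bsp_mult a b" if "p \<in> set_square L" for p
    using sq_elem that by blast
  have Lsub: "a \<in> S" "a \<noteq> u" if "a \<in> L" for a using that L_def by auto
  show ?thesis
  proof (cases "\<exists>v\<in>L. fst v = mt")
    case True
    define V where "V = {s \<in> L. fst s = mt}"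
    have fV: "finite V" "V \<noteq> {}" using fin True V_def L_def by auto
    define xv where "xv = Max (snd ` V)"
    obtain v where v: "v \<in> V" "snd v = xv" using fV xv_def
      by (metis (mono_tags, lifting) Max_in finite_imageI image_iff image_is_empty)
    have v_eq: "v = (mt, xv)" using v V_def by (simp add: prod_eq_iff)
    have vS: "v \<in> S" "v \<noteq> u" using v V_def L_def by auto
    have xv_le: "snd a \<le> xv" if "a \<in> L" "fst a = mt" for a
      using that V_def xv_def fV by simp
    have xv_lt: "xv < xu"
    proof -
      have "xv \<le> xu" using umax2 vS v_eq mt_def xu_def by auto
      moreover have "xv \<noteq> xu" using vS(2) v_eq u_eq by auto
      ultimately show ?thesis by simp
    qed
    define S1 where "S1 = {s \<in> S. fst s = m1}"
    have "s1 \<in> S1" using s1 S1_def by simp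
    have fS1a: "finite S1" using fin S1_def by simp
    have fS1: "finite S1" "S1 \<noteq> {}" using fS1a \<open>s1 \<in> S1\<close> by blast+
    define xs where "xs = Max (snd ` S1)"
    obtain w where w: "w \<in> S1" "snd w = xs" using fS1 xs_def
      by (metis (mono_tags, lifting) Max_in finite_imageI image_iff image_is_empty)
    have w_eq: "w = (m1, xs)" using w S1_def by (simp add: prod_eq_iff)
    have wS: "w \<in> S" using w S1_def by auto
    have xs_le: "snd a \<le> xs" if "a \<in> S" "fst a = m1" for a
      using that S1_def xs_def fS1 by simp
    define e1 where "e1 = bsp_mult u u"
    define e2 where "e2 = bsp_mult u v"
    define e3 where "e3 = bsp_mult v u"
    define e4 where "e4 = (mt + m1, max (xs + 3 ^ m1 * xu) (xu + 3 ^ mt * xs))"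
    have E: "e1 = (mt + mt, xu + 3 ^ mt * xu)" "e2 = (mt + mt, xv + 3 ^ mt * xu)"
      "e3 = (mt + mt, xu + 3 ^ mt * xv)"
      unfolding e1_def e2_def e3_def u_eq v_eq by (simp_all add: bsp_mult_simp)
    have e4S: "e4 \<in> set_square S"
    proof (cases "xs + 3 ^ m1 * xu \<ge> xu + 3 ^ mt * xs")
      case True
      then have "e4 = bsp_mult u w" unfolding e4_def u_eq w_eq by (simp add: bsp_mult_simp)
      then show ?thesis using uS wS sq_mem by auto
    next
      case False
      then have "e4 = bsp_mult w u" unfolding e4_def u_eq w_eq by (simp add: bsp_mult_simp add.commute)
      then show ?thesis using uS wS sq_mem by auto
    qed
    have sub: "{e1, e2, e3, e4} \<subseteq> set_square S"
      using e4S uS vS sq_mem unfolding e1_def e2_def e3_def by auto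
    have top_bound: "snd p \<le> xv + 3 ^ mt * xv" if pL: "p \<in> set_square L" and pf: "fst p = mt + mt" for p
    proof -
      obtain a b where ab: "a \<in> L" "b \<in> L" "p = bsp_mult a b" using sqL pL by blast
      have "fst a + fst b = mt + mt" using ab pf by (simp add: fst_mult)
      moreover have "fst a \<le> mt" "fst b \<le> mt" using ab le_mt Lsub by auto
      ultimately have "fst a = mt" "fst b = mt" by auto
      then have "snd a \<le> xv" "snd b \<le> xv" using xv_le ab by auto
      then have "snd b + 3 ^ fst b * snd a \<le> xv + 3 ^ mt * xv" using \<open>fst b = mt\<close> by (simp add: add_mono)
      then show ?thesis using ab by (simp add: snd_mult)
    qed
    have mid_bound: "snd p < max (xs + 3 ^ m1 * xu) (xu + 3 ^ mt * xs)" if pL: "p \<in> set_square L" and pf: "fst p = mt + m1" for p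
    proof -
      obtain a b where ab: "a \<in> L" "b \<in> L" "p = bsp_mult a b" using sqL pL by blast
      have sum: "fst a + fst b = mt + m1" using ab pf by (simp add: fst_mult)
      have aS: "a \<in> S" "b \<in> S" using ab Lsub by auto
      show ?thesis
      proof (cases "fst a = mt")
        case True
        then have fb: "fst b = m1" using sum by simp
        have "snd a \<le> xv" using xv_le ab True by simp
        then have h1: "(3::int) ^ m1 * snd a < 3 ^ m1 * xu" using xv_lt by (intro mult_strict_left_mono) auto
        have h2: "snd b \<le> xs" using xs_le aS fb by simp
        have h3: "(3::int) ^ fst b * snd a = 3 ^ m1 * snd a" using fb by simp
        have "snd b + 3 ^ fst b * snd a < xs + 3 ^ m1 * xu" using h1 h2 h3 by linarith
        then show ?thesis using ab by (simp add: snd_mult)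
      next
        case False
        then have "fst a \<le> m1" using le_m1 aS by simp
        then have fb: "fst b = mt" "fst a = m1" using sum le_mt[OF aS(2)] by auto
        have "snd b \<le> xv" using xv_le ab fb by simp
        then have h1: "snd b < xu" using xv_lt by simp
        have "snd a \<le> xs" using xs_le aS fb by simp
        then have h2: "(3::int) ^ mt * snd a \<le> 3 ^ mt * xs" by (intro mult_left_mono) auto
        have h3: "(3::int) ^ fst b * snd a = 3 ^ mt * snd a" using fb by simp
        have "snd b + 3 ^ fst b * snd a < xu + 3 ^ mt * xs" using h1 h2 h3 by linarith
        then show ?thesis using ab by (simp add: snd_mult)
      qed
    qed
    have dis: "{e1, e2, e3, e4} \<inter> set_square L = {}"
    proof -
      have "e1 \<notin> set_square L" using top_bound[of e1] E lam xv_lt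
        by (smt (verit) fst_conv mult_strict_left_mono snd_conv zero_less_power)
      moreover have "e2 \<notin> set_square L" using top_bound[of e2] E lam xv_lt
        by (smt (verit) fst_conv mult_strict_left_mono snd_conv zero_less_power)
      moreover have "e3 \<notin> set_square L" using top_bound[of e3] E lam xv_lt
        by (smt (verit) fst_conv snd_conv)
      moreover have "e4 \<notin> set_square L" using mid_bound[of e4] unfolding e4_def by auto
      ultimately show ?thesis by blast
    qed
    have d: "distinct [e1, e2, e3, e4]"
    proof -
      have "e1 \<noteq> e2" using E xv_lt by auto
      moreover have "e1 \<noteq> e3"
      proof
        assume "e1 = e3"
        then have "3 ^ mt * xu = 3 ^ mt * (xv::int)" using E by simp
        then show False using xv_lt by simp
      qed
      moreover have "e2 \<noteq> e3"
      proof
        assume "e2 = e3"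
        then have "xv + 3 ^ mt * xu = xu + 3 ^ mt * xv" using E by simp
        then have "(3 ^ mt - 1) * (xu - xv) = 0" by (simp add: algebra_simps)
        then show False using lam xv_lt by simp
      qed
      moreover have "e4 \<notin> {e1, e2, e3}" using E m1_lt unfolding e4_def by auto
      ultimately show ?thesis by auto
    qed
    show ?thesis using four_new[OF fin LS sub dis d] L_def by simp
  next
    case False
    then have notop: "fst a \<noteq> mt" if "a \<in> L" for a using that by auto
    have Lle: "fst a \<le> m1" if "a \<in> L" for a using le_m1 notop Lsub that by auto
    have Lprod: "fst p \<le> m1 + m1" if pL: "p \<in> set_square L" for p
    proof -
      obtain a b where "a \<in> L" "b \<in> L" "p = bsp_mult a b" using sqL pL by blast
      then show ?thesis using Lle by (simp add: fst_mult add_mono)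
    qed
    have notL: "p \<notin> set_square L" if "fst p > m1 + m1" for p
      using Lprod that by fastforce
    have Yuu: "Yf u u = 0" by (rule Yf_self)
    have fu1: "fst u \<ge> 1" using mt1 mt_def by simp
    show ?thesis
    proof (cases "\<exists>a\<in>S. \<exists>b\<in>S. fst a = m1 \<and> fst b = m1 \<and> snd a < snd b")
      case True
      then obtain a1 a2 where a: "a1 \<in> S" "a2 \<in> S" "fst a1 = m1" "fst a2 = m1" "snd a1 < snd a2" by blast
      define x1 where "x1 = snd a1"
      define x2 where "x2 = snd a2"
      have a_eq: "a1 = (m1, x1)" "a2 = (m1, x2)" using a x1_def x2_def by (simp_all add: prod_eq_iff)
      define e1 where "e1 = bsp_mult u u"
      define e2 where "e2 = bsp_mult u a1"
      define e3 where "e3 = bsp_mult u a2"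
      define f1 where "f1 = bsp_mult a1 u"
      define f2 where "f2 = bsp_mult a2 u"
      define e4 where "e4 = (if f2 \<notin> {e2, e3} then f2 else f1)"
      have E: "e1 = (mt + mt, xu + 3 ^ mt * xu)" "e2 = (mt + m1, x1 + 3 ^ m1 * xu)"
        "e3 = (mt + m1, x2 + 3 ^ m1 * xu)" "f1 = (mt + m1, xu + 3 ^ mt * x1)"
        "f2 = (mt + m1, xu + 3 ^ mt * x2)"
        unfolding e1_def e2_def e3_def f1_def f2_def u_eq a_eq by (simp_all add: bsp_mult_simp add.commute)
      have x12: "x1 < x2" using a x1_def x2_def by simp
      have e4n: "e4 \<notin> {e2, e3}"
      proof (cases "f2 \<notin> {e2, e3}")
        case True
        then show ?thesis unfolding e4_def by simp
      next
        case False
        then have f2in: "f2 = e2 \<or> f2 = e3" by simp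
        have e4f1: "e4 = f1" using False unfolding e4_def by simp
        show ?thesis
        proof
          assume "e4 \<in> {e2, e3}"
          then have f1in: "f1 = e2 \<or> f1 = e3" using e4f1 by simp
          have ne: "f1 \<noteq> f2" using E x12 lam by auto
          show False
          proof (cases "f1 = e2")
            case True
            then have "f2 = e3" using f2in ne by auto
            then have "xu + 3 ^ mt * x1 = x1 + 3 ^ m1 * xu" "xu + 3 ^ mt * x2 = x2 + 3 ^ m1 * xu"
              using True E by auto
            then have "(3 ^ mt - 1) * (x2 - x1) = 0" by (simp add: algebra_simps)
            then show False using lam x12 by simp
          next
            case False
            then have "f1 = e3" "f2 = e2" using f1in f2in ne by auto
            then have "xu + 3 ^ mt * x1 = x2 + 3 ^ m1 * xu" "xu + 3 ^ mt * x2 = x1 + 3 ^ m1 * xu"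
              using E by auto
            then have "(3 ^ mt + 1) * (x2 - x1) = 0" by (simp add: algebra_simps)
            moreover have "(3::int) ^ mt + 1 > 0" by (simp add: add_pos_pos)
            ultimately show False using x12 by simp
          qed
        qed
      qed
      have sub: "{e1, e2, e3, e4} \<subseteq> set_square S"
        using uS a sq_mem unfolding e1_def e2_def e3_def e4_def f1_def f2_def by auto
      have fe4: "fst e4 = mt + m1" using E unfolding e4_def by auto
      have dis: "{e1, e2, e3, e4} \<inter> set_square L = {}"
        using notL[of e1] notL[of e2] notL[of e3] notL[of e4] E fe4 m1_lt by auto
      have d: "distinct [e1, e2, e3, e4]"
      proof -
        have "e1 \<noteq> e2" "e1 \<noteq> e3" "e1 \<noteq> e4" using E fe4 m1_lt by auto
        moreover have "e2 \<noteq> e3" using E x12 by auto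
        ultimately show ?thesis using e4n by auto
      qed
      show ?thesis using four_new[OF fin LS sub dis d] L_def by simp
    next
      case False
      define v where "v = s1"
      have vS: "v \<in> S" "fst v = m1" using s1 v_def by auto
      have vuniq: "a = v" if "a \<in> S" "fst a = m1" for a
      proof -
        have "\<not> snd a < snd v" "\<not> snd v < snd a" using False that vS by blast+
        then have "snd a = snd v" by simp
        then show ?thesis using that vS by (simp add: prod_eq_iff)
      qed
      have vL: "v \<in> L" using vS m1_lt L_def mt_def by auto
      have onlyv: "a = v" if "a \<in> L" "fst a > m2" for a
      proof -
        have "a \<in> S" "fst a \<noteq> mt" using that Lsub notop by auto
        moreover have "fst a = m1"
        proof (rule ccontr)
          assume "fst a \<noteq> m1"
          then have "fst a \<le> m2" using le_m2 \<open>a \<in> S\<close> \<open>fst a \<noteq> mt\<close> by simp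
          then show False using that by simp
        qed
        ultimately show ?thesis using vuniq by simp
      qed
      show ?thesis
      proof (cases "bsp_mult u v = bsp_mult v u")
        case False
        have Yv: "Yf u v \<noteq> 0" using False Yf_comm[of v u] by auto
        define e1 where "e1 = bsp_mult u u"
        define e2 where "e2 = bsp_mult u v"
        define e3 where "e3 = bsp_mult v u"
        define e4 where "e4 = (if bsp_mult u s2 \<noteq> bsp_mult v v then bsp_mult u s2 else bsp_mult s2 u)"
        have e4vv: "e4 \<noteq> bsp_mult v v"
        proof (cases "bsp_mult u s2 \<noteq> bsp_mult v v")
          case True
          then show ?thesis unfolding e4_def by simp
        next
          case F2: False
          show ?thesis
          proof
            assume "e4 = bsp_mult v v"
            then have "bsp_mult s2 u = bsp_mult u s2" using F2 unfolding e4_def by simp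
            then have "Yf u s2 = 0" using Yf_comm by blast
            then have "Yf u (bsp_mult u s2) = 0" by (simp add: Yf_mult Yuu)
            moreover have "Yf u (bsp_mult v v) = (1 + 3 ^ fst v) * Yf u v" by (simp add: Yf_mult algebra_simps)
            moreover have "(1 + 3 ^ fst v :: int) > 0" by (simp add: add_pos_pos)
            ultimately show False using Yv F2 by auto
          qed
        qed
        have fe: "fst e1 = mt + mt" "fst e2 = mt + m1" "fst e3 = mt + m1" "fst e4 = mt + m2"
          unfolding e1_def e2_def e3_def e4_def using vS s2 mt_def by (auto simp: fst_mult)
        have sub: "{e1, e2, e3, e4} \<subseteq> set_square S"
          using uS vS s2 sq_mem unfolding e1_def e2_def e3_def e4_def by auto
        have e4L: "e4 \<notin> set_square L"
        proof
          assume "e4 \<in> set_square L"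
          then obtain a b where ab: "a \<in> L" "b \<in> L" "e4 = bsp_mult a b" using sqL by blast
          have sum: "fst a + fst b = mt + m2" using ab fe by (simp add: fst_mult)
          have "fst a \<le> m1" "fst b \<le> m1" using Lle ab by auto
          then have "fst a > m2" "fst b > m2" using sum m1_lt by auto
          then have "a = v" "b = v" using onlyv[of a] onlyv[of b] ab by blast+
          then show False using ab e4vv by simp
        qed
        have dis: "{e1, e2, e3, e4} \<inter> set_square L = {}"
          using notL[of e1] notL[of e2] notL[of e3] e4L fe m1_lt by auto
        have d: "distinct [e1, e2, e3, e4]"
        proof -
          have "e1 \<noteq> e2" "e1 \<noteq> e3" "e1 \<noteq> e4" "e2 \<noteq> e4" "e3 \<noteq> e4"
            using fe m1_lt m2_lt by (auto dest: arg_cong[of _ _ fst])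
          moreover have "e2 \<noteq> e3" using False unfolding e2_def e3_def by simp
          ultimately show ?thesis by auto
        qed
        show ?thesis using four_new[OF fin LS sub dis d] L_def by simp
      next
        case True
        have Yv: "Yf u v = 0" using True Yf_comm[of v u] by auto
        define W where "W = {s \<in> L. Yf u s \<noteq> 0}"
        have fW: "finite W" using fin W_def L_def by simp
        have Wne: "W \<noteq> {}"
        proof
          assume "W = {}"
          then have "\<forall>s\<in>L. Yf u s = 0" using W_def by auto
          then show False using nab Yf_zero_comm[OF fu1] L_def by blast
        qed
        define mw where "mw = Max (fst ` W)"
        obtain w where w: "w \<in> W" "fst w = mw" using fW Wne mw_def
          by (metis (mono_tags, lifting) Max_in finite_imageI image_iff image_is_empty)
        have wL: "w \<in> L" "Yf u w \<noteq> 0" using w W_def by auto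
        have wmax: "Yf u s = 0" if "s \<in> L" "fst s > mw" for s
        proof (rule ccontr)
          assume "Yf u s \<noteq> 0"
          then have "s \<in> W" using that W_def by simp
          then have "fst s \<le> mw" using fW mw_def by simp
          then show False using that by simp
        qed
        have mw_lt: "mw < m1"
        proof -
          have "mw \<le> m1" using Lle[OF wL(1)] w(2) by simp
          moreover have "mw \<noteq> m1"
          proof
            assume "mw = m1"
            then have "w = v" using vuniq[of w] Lsub(1)[OF wL(1)] w(2) by simp
            then show False using wL Yv by simp
          qed
          ultimately show ?thesis by simp
        qed
        define e1 where "e1 = bsp_mult u u"
        define e2 where "e2 = bsp_mult u v"
        define e3 where "e3 = bsp_mult u w"
        define e4 where "e4 = bsp_mult w u"
        have Ye3: "Yf u e3 = Yf u w" unfolding e3_def by (simp add: Yf_mult Yuu)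
        have Ye4: "Yf u e4 = 3 ^ mt * Yf u w" unfolding e4_def by (simp add: Yf_mult Yuu mt_def)
        have fe: "fst e1 = mt + mt" "fst e2 = mt + m1" "fst e3 = mt + mw" "fst e4 = mt + mw"
          unfolding e1_def e2_def e3_def e4_def using vS w mt_def by (auto simp: fst_mult)
        have sub: "{e1, e2, e3, e4} \<subseteq> set_square S"
          using uS vS wL Lsub sq_mem unfolding e1_def e2_def e3_def e4_def by auto
        have zeroL: "Yf u p = 0" if pL: "p \<in> set_square L" and pf: "fst p = mt + mw" for p
        proof -
          obtain a b where ab: "a \<in> L" "b \<in> L" "p = bsp_mult a b" using sqL pL by blast
          have sum: "fst a + fst b = mt + mw" using ab pf by (simp add: fst_mult)
          have "fst a \<le> m1" "fst b \<le> m1" using Lle ab by auto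
          then have "fst a > mw" "fst b > mw" using sum m1_lt by auto
          then have "Yf u a = 0" "Yf u b = 0" using wmax ab by auto
          then show ?thesis using ab by (simp add: Yf_mult)
        qed
        have e34ne: "Yf u e3 \<noteq> 0" "Yf u e4 \<noteq> 0" using Ye3 Ye4 wL by auto
        have dis: "{e1, e2, e3, e4} \<inter> set_square L = {}"
          using notL[of e1] notL[of e2] fe m1_lt zeroL[of e3] zeroL[of e4] e34ne by auto
        have d: "distinct [e1, e2, e3, e4]"
        proof -
          have "e1 \<noteq> e2" "e1 \<noteq> e3" "e1 \<noteq> e4" "e2 \<noteq> e3" "e2 \<noteq> e4"
            using fe m1_lt mw_lt by (auto dest: arg_cong[of _ _ fst])
          moreover have "e3 \<noteq> e4"
          proof
            assume "e3 = e4"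
            then have "Yf u w = 3 ^ mt * Yf u w" using Ye3 Ye4 by simp
            then have "(3 ^ mt - 1) * Yf u w = 0" by (simp add: algebra_simps)
            then show False using lam wL by simp
          qed
          ultimately show ?thesis by auto
        qed
        show ?thesis using four_new[OF fin LS sub dis d] L_def by simp
      qed
    qed
  qed
qed

lemma main_ineq:
  "finite S \<Longrightarrow> card (fst ` S) \<ge> 2 \<Longrightarrow> (\<exists>a\<in>S. \<exists>b\<in>S. bsp_mult a b \<noteq> bsp_mult b a)
    \<Longrightarrow> 7 * card S \<le> 2 * card (set_square S) + 12"
proof (induction "card S" arbitrary: S rule: less_induct)
  case less
  have fin: "finite S" by fact
  show ?case
  proof (cases "card (fst ` S) = 2")
    case True
    then obtain m0 m1 where mm: "fst ` S = {m0, m1}" "m0 \<noteq> m1" by (auto simp: card_2_iff)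
    show ?thesis
    proof (cases "m0 < m1")
      case True
      then show ?thesis using two_cosets[OF fin mm(1)] by simp
    next
      case False
      then have "m1 < m0" using mm(2) by simp
      moreover have "fst ` S = {m1, m0}" using mm(1) by auto
      ultimately show ?thesis using two_cosets[OF fin] by simp
    qed
  next
    case False
    then have three: "card (fst ` S) \<ge> 3" using less(3) by simp
    have fS: "finite (fst ` S)" "fst ` S \<noteq> {}" using fin three by auto
    define mt where "mt = Max (fst ` S)"
    define T where "T = {s \<in> S. fst s = mt}"
    have mtS: "mt \<in> fst ` S" using fS mt_def by simp
    have fT: "finite T" "T \<noteq> {}" using fin mtS T_def by auto
    define xu where "xu = Max (snd ` T)"
    obtain u where u: "u \<in> T" "snd u = xu" using fT xu_def
      by (metis (mono_tags, lifting) Max_in finite_imageI image_iff image_is_empty)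
    have uS: "u \<in> S" "fst u = mt" using u T_def by auto
    have umax: "\<forall>s\<in>S. fst s \<le> fst u" using uS mt_def fS by simp
    have umax2: "\<forall>s\<in>S. fst s = fst u \<longrightarrow> snd s \<le> snd u"
      using u uS T_def xu_def fT by auto
    define L where "L = S - {u}"
    have fL: "finite L" using fin L_def by simp
    have cL: "card L = card S - 1" using uS fin L_def by simp
    have "card S > 0" using fin uS card_gt_0_iff by blast
    then have cS: "card S \<ge> 1" by simp
    have lt: "card L < card S" using cL cS by simp
    have sub: "fst ` S - {mt} \<subseteq> fst ` L"
    proof
      fix m assume "m \<in> fst ` S - {mt}"
      then obtain s where "s \<in> S" "fst s = m" "m \<noteq> mt" by auto
      then have "s \<in> L" using uS L_def by auto
      then show "m \<in> fst ` L" using \<open>fst s = m\<close> by auto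
    qed
    have cfL: "card (fst ` L) \<ge> 2"
    proof -
      have "card (fst ` S - {mt}) = card (fst ` S) - 1" using mtS fS by simp
      then have "card (fst ` S - {mt}) \<ge> 2" using three by simp
      then show ?thesis using card_mono[OF finite_imageI[OF fL] sub] by simp
    qed
    show ?thesis
    proof (cases "\<exists>a\<in>L. \<exists>b\<in>L. bsp_mult a b \<noteq> bsp_mult b a")
      case True
      have IH: "7 * card L \<le> 2 * card (set_square L) + 12"
        using less(1)[OF lt fL cfL True] .
      have "card (set_square L) + 4 \<le> card (set_square S)"
        using claimT[OF fin uS(1) umax umax2 three] True L_def by simp
      then show ?thesis using IH cL cS by linarith
    next
      case False
      then have Lc: "\<forall>a\<in>S - {u}. \<forall>b\<in>S - {u}. bsp_mult a b = bsp_mult b a" using L_def by auto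
      obtain z where z: "z \<in> L" "fst z \<ge> 1"
      proof -
        obtain m where "m \<in> fst ` L" "m \<noteq> 0"
        proof -
          have "\<not> fst ` L \<subseteq> {0}" using cfL card_mono[of "{0}" "fst ` L"] by auto
          then show ?thesis using that by auto
        qed
        then show ?thesis using that by auto
      qed
      have "4 * card L \<le> card (set_square S) + 1"
        using abelian_plus_one[OF fin uS(1) Lc _ z(2) less(4)] z(1) L_def by simp
      then show ?thesis using cL cS by linarith
    qed
  qed
qed

theorem mainTheorem1:
  fixes S :: "bsp set"
  assumes "finite S"
    and "card S \<ge> 3"
    and "non_abelian S"
    and "\<exists>s\<in>S. \<exists>s'\<in>S. fst s \<noteq> fst s'"
  shows "real (card (set_square S)) \<ge> 7 / 2 * real (card S) - 6"
proof -
  obtain s s' where ss: "s \<in> S" "s' \<in> S" "fst s \<noteq> fst s'" using assms(4) by blast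
  have "{fst s, fst s'} \<subseteq> fst ` S" using ss by auto
  then have "card {fst s, fst s'} \<le> card (fst ` S)" using assms(1) by (intro card_mono) auto
  then have c2: "card (fst ` S) \<ge> 2" using ss(3) by simp
  have "7 * card S \<le> 2 * card (set_square S) + 12"
    using main_ineq[OF assms(1) c2 non_abelian_pair[OF assms(3)]] .
  then have "real (7 * card S) \<le> real (2 * card (set_square S) + 12)" by linarith
  then show ?thesis by simp
qed

end
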